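(* Let $\ell$ be a finite linear order with $n=|\ell|\ge2$, let $\mathscr T$ be a Schröder tree on $\ell$ enriched with connected graphs, with root $r$, and $g=\bigvee\mathscr T$. Then $$\sigma(L(g^c))=0\cdot\Big(\prod_{w\in\mathrm{Iv}(\mathscr T),\,w\neq r}\varphi_{n-N_{rw}}\big(-\sigma(\mathscr L(g_w))\big)\Big)\cdot\varphi_n\big(-\sigma(\mathscr L(g_r))\big),$$ where $-\sigma$ denotes the multiset of negatives of the elements of $\sigma$.
   Context: All graphs finite and simple; $g^c$ complement; $L(\cdot)$ Laplacian. Spectra are multisets written multiplicatively (product = multiset union). Generalized composition: for a segmented partition $\pi=(\ell_1,\dots,\ell_k)$ of $\ell$ (nonempty consecutive segments whose concatenation is $\ell$), graphs $g_{\ell_j}$ on $\ell_j$ and a graph $h$ on $\pi$, $\bigvee_h(g_{\ell_1},\dots,g_{\ell_k})$ has vertex set $\ell$ and edges those of the $g_{\ell_j}$ plus all $\{x,y\}$, $x\in\ell_i,y\in\ell_j$, $\{\ell_i,\ell_j\}\in E(h)$. Graph-enriched Schröder tree on $\ell$: rooted plane tree with leaves the elements of $\ell$ left to right, each internal vertex with at least two children, and a graph $g_v$ on $\pi_v=(\ell_{v_1},\dots,\ell_{v_k})$ for each internal $v$ (children $v_1,\dots,v_k$ left to right, $\ell_u$ the leaves below $u$). Enriched with connected graphs means every $g_v$ is connected. $\mathrm{Iv}(\mathscr T)$ internal vertices; $\bigvee$ of a leaf is the one-vertex graph and $\bigvee\mathscr T=\bigvee_{g_r}(\bigvee\mathscr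 T_{r_1},\dots,\bigvee\mathscr T_{r_k})$. $\mathscr L(g_v)$: with $n_i=|\ell_{v_i}|$, $N_i=\sum_{s:\{\ell_{v_s},\ell_{v_i}\}\in E(g_v)}n_s$, the $k\times k$ matrix with diagonal $N_i$ and $(i,j)$ entry ($i\ne j$) $-\sqrt{n_in_j}$ if $\{\ell_{v_i},\ell_{v_j}\}\in E(g_v)$, else $0$. For non-root internal $w$ with parent $u$, $N_w=\sum_{x:\{\ell_x,\ell_w\}\in E(g_u)}|\ell_x|$, and $N_{rw}=N_{w_1}+\cdots+N_{w_m}$ along the path $r=w_0,w_1,\dots,w_m=w$. $\varphi_s(\omega)$, for a finite multiset $\omega$ of reals and $s\in\mathbb R$: remove one occurrence of $0$ from $\omega$ if present, then add $s$ to every remaining element. *)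

theory Defs
  imports "Jordan_Normal_Form.Char_Poly" "HOL-Library.Multiset"
begin

text \<open>A leaf carries an element of the linear order; an internal vertex carries the
  graph g_v on its children, given as a set of pairs of child indices (0-based, left
  to right), together with the list of its subtrees.\<close>
datatype 'a stree = Leaf 'a | Node "(nat \<times> nat) set" "'a stree list"

fun leaves :: "'a stree \<Rightarrow> 'a list" where
  "leaves (Leaf x) = [x]"
| "leaves (Node G ts) = concat (map leaves ts)"

fun wf_ctree :: "'a stree \<Rightarrow> bool" where
  "wf_ctree (Leaf x) = True"
| "wf_ctree (Node G ts) =
     (length ts \<ge> 2 \<and>
      G \<subseteq> {0..<length ts} \<times> {0..<length ts} \<and>
      sym G \<and> (\<forall>i. (i, i) \<notin> G) \<and>
      (\<forall>i<length ts. \<forall>j<length ts. (i, j) \<in> G\<^sup>*) \<and>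
      (\<forall>t\<in>set ts. wf_ctree t))"

fun comp_edges :: "'a stree \<Rightarrow> ('a \<times> 'a) set" where
  "comp_edges (Leaf x) = {}"
| "comp_edges (Node G ts) =
     (\<Union>t\<in>set ts. comp_edges t) \<union>
     {(x, y). \<exists>i j. (i, j) \<in> G \<and> i < length ts \<and> j < length ts \<and>
                     x \<in> set (leaves (ts ! i)) \<and> y \<in> set (leaves (ts ! j))}"

definition compl_edges :: "'a list \<Rightarrow> ('a \<times> 'a) set \<Rightarrow> ('a \<times> 'a) set" where
  "compl_edges vs E = {(x, y). x \<in> set vs \<and> y \<in> set vs \<and> x \<noteq> y \<and> (x, y) \<notin> E}"

definition laplacian_mat :: "'a list \<Rightarrow> ('a \<times> 'a) set \<Rightarrow> real mat" where
  "laplacian_mat vs E = mat (length vs) (length vs) (\<lambda>(i, j).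
     if i = j then real (card {k. k < length vs \<and> (vs ! i, vs ! k) \<in> E})
     else if (vs ! i, vs ! j) \<in> E then -1 else 0)"

text \<open>Spectrum (multiset of eigenvalues with algebraic multiplicity): the multiset of
  roots of the characteristic polynomial, when it splits over the reals.\<close>
definition mspec :: "real mat \<Rightarrow> real multiset" where
  "mspec A = (THE \<sigma>. char_poly A = prod_mset (image_mset (\<lambda>x. [:- x, 1:]) \<sigma>))"

definition csize :: "'a stree list \<Rightarrow> nat \<Rightarrow> real" where
  "csize ts i = real (length (leaves (ts ! i)))"

definition Nbr :: "(nat \<times> nat) set \<Rightarrow> 'a stree list \<Rightarrow> nat \<Rightarrow> real" where
  "Nbr G ts i = (\<Sum>s\<in>{s. s < length ts \<and> (s, i) \<in> G}. csize ts s)"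

definition qlap :: "(nat \<times> nat) set \<Rightarrow> 'a stree list \<Rightarrow> real mat" where
  "qlap G ts = mat (length ts) (length ts) (\<lambda>(i, j).
     if i = j then Nbr G ts i
     else if (i, j) \<in> G then - sqrt (csize ts i * csize ts j) else 0)"

definition phi :: "real \<Rightarrow> real multiset \<Rightarrow> real multiset" where
  "phi s \<omega> = image_mset (\<lambda>x. x + s) (\<omega> - {#0#})"

definition neg_ms :: "real multiset \<Rightarrow> real multiset" where
  "neg_ms \<omega> = image_mset uminus \<omega>"

text \<open>tree_part n a T, for an internal vertex w with a = N_{rw} (a = 0 for the root),
  is the multiset union of phi_{n - N_{rw'}}(- sigma(L(g_{w'}))) over all internal
  vertices w' of the subtree rooted at w. Passing to child i of w adds N_i (the
  quantity N_{w_i} of the statement), so N_{rw} accumulates along the path.\<close>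
function tree_part :: "nat \<Rightarrow> real \<Rightarrow> 'a stree \<Rightarrow> real multiset" where
  "tree_part n a (Leaf x) = {#}"
| "tree_part n a (Node G ts) =
     phi (real n - a) (neg_ms (mspec (qlap G ts))) +
     sum_list (map (\<lambda>(i, t). tree_part n (a + Nbr G ts i) t) (zip [0..<length ts] ts))"
  by pat_completeness auto
termination
  by (relation "measure (\<lambda>(n, a, t). size t)")
     (auto dest!: set_zip_rightD simp: le_imp_less_Suc size_list_estimation')

end

theory Submission
  imports Defs
begin

definition matLL :: "('a \<Rightarrow> 'a \<Rightarrow> 'b) \<Rightarrow> 'a list \<Rightarrow> 'a list \<Rightarrow> 'b mat" where
  "matLL f as bs = mat (length as) (length bs) (\<lambda>(i,j). f (as!i) (bs!j))"

lemma matLL_carrier[simp]: "matLL f as bs \<in> carrier_mat (length as) (length bs)"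
  and matLL_dim[simp]: "dim_row (matLL f as bs) = length as" "dim_col (matLL f as bs) = length bs"
  by (auto simp: matLL_def)

lemma matLL_index[simp]: "i < length as \<Longrightarrow> j < length bs \<Longrightarrow> matLL f as bs $$ (i,j) = f (as!i) (bs!j)"
  by (simp add: matLL_def)

lemma sum_distinct_nth: "distinct bs \<Longrightarrow> (\<Sum>k<length bs. h (bs!k)) = (\<Sum>z\<in>set bs. h z)"
proof -
  assume d: "distinct bs"
  have "set bs = (\<lambda>k. bs!k) ` {..<length bs}" by (auto simp: set_conv_nth)
  moreover have "inj_on (\<lambda>k. bs!k) {..<length bs}" using d by (auto simp: inj_on_def nth_eq_iff_index_eq)
  ultimately show ?thesis by (simp add: sum.reindex)
qed

lemma matLL_mult:
  fixes f g :: "'a \<Rightarrow> 'a \<Rightarrow> 'b::comm_ring_1"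
  assumes "distinct bs"
  shows "matLL f as bs * matLL g bs cs = matLL (\<lambda>x y. \<Sum>z\<in>set bs. f x z * g z y) as cs"
proof (rule eq_matI)
  fix i j assume i: "i < dim_row (matLL (\<lambda>x y. \<Sum>z\<in>set bs. f x z * g z y) as cs)"
    and j: "j < dim_col (matLL (\<lambda>x y. \<Sum>z\<in>set bs. f x z * g z y) as cs)"
  then have i: "i < length as" and j: "j < length cs" by auto
  show "(matLL f as bs * matLL g bs cs) $$ (i, j) = matLL (\<lambda>x y. \<Sum>z\<in>set bs. f x z * g z y) as cs $$ (i, j)"
    using i j assms
    by (simp add: times_mat_def scalar_prod_def row_def col_def sum_distinct_nth[OF assms, symmetric] atLeast0LessThan)
qed auto

lemma matLL_one:
  assumes "distinct as"
  shows "matLL (\<lambda>x y. if x = y then 1 else 0) as as = (1\<^sub>m (length as) :: 'b::{zero,one} mat)"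
  by (rule eq_matI, insert assms, auto simp: nth_eq_iff_index_eq)

lemma matLL_cong:
  assumes "\<And>x y. x \<in> set as \<Longrightarrow> y \<in> set bs \<Longrightarrow> f x y = g x y"
  shows "matLL f as bs = matLL g as bs"
  by (rule eq_matI, insert assms, auto)

lemma matLL_append:
  "matLL f (us @ ws) (us @ ws) = four_block_mat (matLL f us us) (matLL f us ws) (matLL f ws us) (matLL f ws ws)"
  by (rule eq_matI, auto simp: nth_append)

lemma sim_matLL:
  fixes f g p q :: "'a \<Rightarrow> 'a \<Rightarrow> 'b::comm_ring_1"
  assumes d: "distinct vs" "distinct ws" and st: "set vs = set ws"
    and pq: "\<And>x y. x \<in> set vs \<Longrightarrow> y \<in> set vs \<Longrightarrow> (\<Sum>z\<in>set vs. p x z * q z y) = (if x = y then 1 else 0)"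
    and qp: "\<And>x y. x \<in> set vs \<Longrightarrow> y \<in> set vs \<Longrightarrow> (\<Sum>z\<in>set vs. q x z * p z y) = (if x = y then 1 else 0)"
    and ab: "\<And>x y. x \<in> set vs \<Longrightarrow> y \<in> set vs \<Longrightarrow> (\<Sum>z\<in>set vs. p x z * g z y) = (\<Sum>z\<in>set vs. f x z * p z y)"
  shows "char_poly (matLL f vs vs) = char_poly (matLL g ws ws)"
proof -
  let ?P = "matLL p vs ws" and ?Q = "matLL q ws vs" and ?A = "matLL f vs vs" and ?B = "matLL g ws ws"
  have len: "length ws = length vs" using d st by (metis distinct_card)
  have PQ: "?P * ?Q = 1\<^sub>m (length vs)"
  proof -
    have "?P * ?Q = matLL (\<lambda>x y. if x = y then 1 else 0) vs vs"
      unfolding matLL_mult[OF d(2)] by (rule matLL_cong, insert pq st, auto)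
    then show ?thesis using matLL_one[OF d(1)] by simp
  qed
  have QP: "?Q * ?P = 1\<^sub>m (length vs)"
  proof -
    have "?Q * ?P = matLL (\<lambda>x y. if x = y then 1 else 0) ws ws"
      unfolding matLL_mult[OF d(1)] by (rule matLL_cong, insert qp st, auto)
    then show ?thesis using matLL_one[OF d(2)] len by simp
  qed
  have PB: "?P * ?B = ?A * ?P"
    unfolding matLL_mult[OF d(1)] matLL_mult[OF d(2)] by (rule matLL_cong, insert ab st, auto)
  have "?A = ?A * (?P * ?Q)" using PQ by simp
  also have "\<dots> = (?A * ?P) * ?Q" by (rule assoc_mult_mat[symmetric], auto simp: len)
  also have "\<dots> = ?P * ?B * ?Q" using PB by simp
  finally have "?A = ?P * ?B * ?Q" .
  then have "similar_mat ?A ?B"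
    by (intro similar_matI[where n="length vs" and P="?P" and Q="?Q"], insert PQ QP len, auto)
  then show ?thesis by (rule char_poly_similar)
qed


definition cpS :: "('a::linorder \<Rightarrow> 'a \<Rightarrow> real) \<Rightarrow> 'a set \<Rightarrow> real poly" where
  "cpS f V = char_poly (matLL f (sorted_list_of_set V) (sorted_list_of_set V))"

lemma delta_sum': "finite V \<Longrightarrow> (\<Sum>z\<in>V. h z * (if z = y then 1 else 0)) = (if y \<in> V then h y else (0::'b::comm_ring_1))"
proof -
  have "\<And>z. h z * (if z = y then 1 else 0) = (if z = y then h z else 0)" by simp
  then show "finite V \<Longrightarrow> ?thesis" by (simp add: sum.delta')
qed

lemma delta_sum'': "finite V \<Longrightarrow> (\<Sum>z\<in>V. (if x = z then 1 else 0) * h z) = (if x \<in> V then h x else (0::'b::comm_ring_1))"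
proof -
  have "\<And>z. (if x = z then 1 else 0) * h z = (if x = z then h z else 0)" by simp
  then show "finite V \<Longrightarrow> ?thesis" by (simp add: sum.delta)
qed

lemma cpS_list:
  assumes "distinct ws" "set ws = V"
  shows "cpS f V = char_poly (matLL f ws ws)"
proof -
  have fin: "finite V" using assms by auto
  show ?thesis unfolding cpS_def
    by (rule sim_matLL[where p="\<lambda>x y. if x = y then 1 else 0" and q="\<lambda>x y. if x = y then 1 else 0"],
      insert assms fin, auto simp: delta_sum' delta_sum'')
qed

lemma cpS_cong:
  assumes "finite V" "\<And>x y. x \<in> V \<Longrightarrow> y \<in> V \<Longrightarrow> f x y = g x y"
  shows "cpS f V = cpS g V"
  unfolding cpS_def using assms by (subst matLL_cong[of _ _ f g], auto)

lemma cpS_sim: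
  assumes fin: "finite V"
    and pq: "\<And>x y. x \<in> V \<Longrightarrow> y \<in> V \<Longrightarrow> (\<Sum>z\<in>V. p x z * q z y) = (if x = y then 1 else 0)"
    and qp: "\<And>x y. x \<in> V \<Longrightarrow> y \<in> V \<Longrightarrow> (\<Sum>z\<in>V. q x z * p z y) = (if x = y then 1 else 0)"
    and ab: "\<And>x y. x \<in> V \<Longrightarrow> y \<in> V \<Longrightarrow> (\<Sum>z\<in>V. p x z * g z y) = (\<Sum>z\<in>V. f x z * p z y)"
  shows "cpS f V = cpS g V"
  unfolding cpS_def
  by (rule sim_matLL[where p=p and q=q], insert assms, auto)

lemma char_poly_four_block_zero:
  fixes A1 :: "'b::idom mat"
  assumes A1: "A1 \<in> carrier_mat n n" and A2: "A2 \<in> carrier_mat n m" and A4: "A4 \<in> carrier_mat m m"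
  shows "char_poly (four_block_mat A1 A2 (0\<^sub>m m n) A4) = char_poly A1 * char_poly A4"
proof -
  let ?cm = "\<lambda> A. [:0, 1:] \<cdot>\<^sub>m 1\<^sub>m (dim_row A) + map_mat (\<lambda>a. [:- a:]) A"
  let ?B2 = "map_mat (\<lambda>a. [:- a:]) A2"
  have "char_poly (four_block_mat A1 A2 (0\<^sub>m m n) A4) = det (?cm (four_block_mat A1 A2 (0\<^sub>m m n) A4))"
    unfolding char_poly_defs using A1 A4 by simp
  also have "?cm (four_block_mat A1 A2 (0\<^sub>m m n) A4) = four_block_mat (?cm A1) ?B2 (0\<^sub>m m n) (?cm A4)"
    by (rule eq_matI, insert A1 A2 A4, auto simp: one_poly_def)
  also have "det \<dots> = det (?cm A1) * det (?cm A4)"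
    by (rule det_four_block_mat_lower_left_zero[OF _ _ refl], insert A1 A2 A4, auto)
  also have "\<dots> = char_poly A1 * char_poly A4" unfolding char_poly_defs ..
  finally show ?thesis .
qed

lemma cpS_split:
  assumes fin: "finite U" "finite W" and disj: "U \<inter> W = {}"
    and z: "\<And>x y. x \<in> W \<Longrightarrow> y \<in> U \<Longrightarrow> f x y = 0"
  shows "cpS f (U \<union> W) = cpS f U * cpS f W"
proof -
  let ?us = "sorted_list_of_set U" and ?ws = "sorted_list_of_set W"
  have d: "distinct (?us @ ?ws)" using fin disj by auto
  have s: "set (?us @ ?ws) = U \<union> W" using fin by auto
  have "cpS f (U \<union> W) = char_poly (matLL f (?us @ ?ws) (?us @ ?ws))" by (rule cpS_list[OF d s])
  also have "matLL f (?us @ ?ws) (?us @ ?ws) = four_block_mat (matLL f ?us ?us) (matLL f ?us ?ws) (0\<^sub>m (length ?ws) (length ?us)) (matLL f ?ws ?ws)"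
    unfolding matLL_append
    by (rule cong_four_block_mat, auto, rule eq_matI, insert z fin, auto,
        metis nth_mem set_sorted_list_of_set length_sorted_list_of_set)
  also have "char_poly \<dots> = char_poly (matLL f ?us ?us) * char_poly (matLL f ?ws ?ws)"
    by (rule char_poly_four_block_zero, auto)
  finally show ?thesis unfolding cpS_def .
qed

lemma cpS_empty: "cpS f {} = 1"
proof -
  have "char_poly_matrix (matLL f [] []) = 1\<^sub>m 0" by (rule eq_matI, auto simp: char_poly_matrix_def)
  then show ?thesis unfolding cpS_def char_poly_def by simp
qed

lemma cpS_single: "cpS f {c} = [:- f c c, 1:]"
proof -
  have "cpS f {c} = char_poly (matLL f [c] [c])" by (rule cpS_list, auto)
  also have "\<dots> = [:- f c c, 1:]" unfolding char_poly_defs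
    by (subst det_single, force, simp)
  finally show ?thesis .
qed

lemma cpS_prod:
  fixes k :: nat
  assumes fin: "\<And>i. i < k \<Longrightarrow> finite (U i)"
    and disj: "\<And>i j. i < k \<Longrightarrow> j < k \<Longrightarrow> i \<noteq> j \<Longrightarrow> U i \<inter> U j = {}"
    and z: "\<And>i j x y. i < k \<Longrightarrow> j < k \<Longrightarrow> i \<noteq> j \<Longrightarrow> x \<in> U i \<Longrightarrow> y \<in> U j \<Longrightarrow> f x y = 0"
  shows "cpS f (\<Union>i<k. U i) = (\<Prod>i<k. cpS f (U i))"
  using assms
proof (induct k)
  case 0
  then show ?case by (simp add: cpS_empty)
next
  case (Suc k)
  have "(\<Union>i<Suc k. U i) = (\<Union>i<k. U i) \<union> U k" by (auto simp: lessThan_Suc)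
  moreover have "cpS f ((\<Union>i<k. U i) \<union> U k) = cpS f (\<Union>i<k. U i) * cpS f (U k)"
  proof (rule cpS_split)
    show "finite (\<Union>i<k. U i)" "finite (U k)" using Suc.prems by auto
    show "(\<Union>i<k. U i) \<inter> U k = {}" using Suc.prems(2)[of _ k] by (auto, metis less_Suc_eq disjoint_iff less_irrefl)
    show "f x y = 0" if "x \<in> U k" "y \<in> (\<Union>i<k. U i)" for x y
      using that Suc.prems(3)[of k _ x y] by (auto, metis less_Suc_eq less_irrefl)
  qed
  moreover have "cpS f (\<Union>i<k. U i) = (\<Prod>i<k. cpS f (U i))"
  proof (rule Suc.hyps)
    show "finite (U i)" if "i < k" for i using Suc.prems(1) that by auto
    show "U i \<inter> U j = {}" if "i < k" "j < k" "i \<noteq> j" for i j using Suc.prems(2) that by auto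
    show "f x y = 0" if "i < k" "j < k" "i \<noteq> j" "x \<in> U i" "y \<in> U j" for i j x y
      using Suc.prems(3)[of i j x y] that by auto
  qed
  ultimately show ?case by simp
qed

lemma psum:
  fixes g :: "'a \<Rightarrow> real"
  assumes fin: "finite V" and x: "x \<in> V" and rx: "r x \<in> V"
  shows "(\<Sum>z\<in>V. ((if z = x then 1 else 0) + (if x \<notin> F \<and> z = r x then 1 else 0)) * g z)
     = g x + (if x \<notin> F then g (r x) else 0)"
proof -
  have "(\<Sum>z\<in>V. ((if z = x then 1 else 0) + (if x \<notin> F \<and> z = r x then 1 else 0)) * g z)
     = (\<Sum>z\<in>V. (if z = x then g z else 0)) + (\<Sum>z\<in>V. (if x \<notin> F \<and> z = r x then g z else 0))"
    by (subst sum.distrib[symmetric], rule sum.cong, auto)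
  also have "\<dots> = g x + (if x \<notin> F then g (r x) else 0)"
    using fin x rx by (simp add: sum.delta')
  finally show ?thesis .
qed

lemma qsum:
  fixes g :: "'a \<Rightarrow> real"
  assumes fin: "finite V" and x: "x \<in> V" and rx: "r x \<in> V"
  shows "(\<Sum>z\<in>V. ((if z = x then 1 else 0) - (if x \<notin> F \<and> z = r x then 1 else 0)) * g z)
     = g x - (if x \<notin> F then g (r x) else 0)"
proof -
  have "(\<Sum>z\<in>V. ((if z = x then 1 else 0) - (if x \<notin> F \<and> z = r x then 1 else 0)) * g z)
     = (\<Sum>z\<in>V. (if z = x then g z else 0)) - (\<Sum>z\<in>V. (if x \<notin> F \<and> z = r x then g z else 0))"
    by (subst sum_subtractf[symmetric], rule sum.cong, auto)
  also have "\<dots> = g x - (if x \<notin> F then g (r x) else 0)"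
    using fin x rx by (simp add: sum.delta')
  finally show ?thesis .
qed

lemma cpS_block:
  fixes f :: "'a::linorder \<Rightarrow> 'a \<Rightarrow> real"
  assumes fin: "finite V" and FV: "F \<subseteq> V" and r: "\<And>x. x \<in> V \<Longrightarrow> r x \<in> F"
    and rF: "\<And>c. c \<in> F \<Longrightarrow> r c = c"
    and AP: "AP = (\<lambda>x y. if y \<in> F then (\<Sum>w\<in>{w\<in>V. r w = y}. f x w) else f x y)"
    and B: "B = (\<lambda>x y. if x \<in> F then AP x y else AP x y - AP (r x) y)"
    and zero: "\<And>x y. x \<in> V - F \<Longrightarrow> y \<in> F \<Longrightarrow> AP x y = AP (r x) y"
  shows "cpS f V = cpS B F * cpS B (V - F)"
proof -
  define p where "p = (\<lambda>x z. (if z = x then 1 else 0) + (if x \<notin> F \<and> z = r x then 1 else (0::real)))"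
  define q where "q = (\<lambda>x z. (if z = x then 1 else 0) - (if x \<notin> F \<and> z = r x then 1 else (0::real)))"
  have rV: "x \<in> V \<Longrightarrow> r x \<in> V" for x using r FV by auto
  have "cpS f V = cpS B V"
  proof (rule cpS_sim[OF fin, where p=p and q=q])
    fix x y assume x: "x \<in> V" and y: "y \<in> V"
    show "(\<Sum>z\<in>V. p x z * q z y) = (if x = y then 1 else 0)"
      unfolding p_def using psum[where V=V and x=x and r=r and F=F and g="\<lambda>z. q z y", OF fin x rV[OF x]] r[OF x] rF[of "r x"] rF[of x]
      by (auto simp: q_def)
    show "(\<Sum>z\<in>V. q x z * p z y) = (if x = y then 1 else 0)"
      unfolding q_def using qsum[where V=V and x=x and r=r and F=F and g="\<lambda>z. p z y", OF fin x rV[OF x]] r[OF x] rF[of "r x"] rF[of x]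
      by (auto simp: p_def)
    have "(\<Sum>z\<in>V. p x z * B z y) = AP x y"
      unfolding p_def using psum[where V=V and x=x and r=r and F=F and g="\<lambda>z. B z y", OF fin x rV[OF x]] r[OF x] rF[of "r x"] rF[of x]
      by (auto simp: B)
    also have "AP x y = (\<Sum>z\<in>V. f x z * p z y)"
    proof (cases "y \<in> F")
      case True
      have "(\<Sum>z\<in>V. f x z * p z y) = (\<Sum>z\<in>V. (if z = y then f x z else 0) + (if z \<notin> F \<and> y = r z then f x z else 0))"
        unfolding p_def by (rule sum.cong, auto)
      also have "\<dots> = f x y + (\<Sum>z\<in>{z\<in>V. z \<notin> F \<and> r z = y}. f x z)"
        using fin y by (simp add: sum.distrib sum.delta' sum.inter_filter[symmetric] eq_commute)
      also have "\<dots> = (\<Sum>w\<in>{w\<in>V. r w = y}. f x w)"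
      proof -
        have "{w\<in>V. r w = y} = insert y {z\<in>V. z \<notin> F \<and> r z = y}"
          using True y rF by auto
        then show ?thesis using True fin by simp
      qed
      finally show ?thesis unfolding AP using True by simp
    next
      case False
      have "(\<Sum>z\<in>V. f x z * p z y) = (\<Sum>z\<in>V. (if z = y then f x z else 0))"
        unfolding p_def by (rule sum.cong, insert False r, auto)
      then show ?thesis unfolding AP using False fin y by (simp add: sum.delta')
    qed
    finally show "(\<Sum>z\<in>V. p x z * B z y) = (\<Sum>z\<in>V. f x z * p z y)" .
  qed
  also have "cpS B V = cpS B (F \<union> (V - F))" using FV by (simp add: Un_absorb1)
  also have "cpS B (F \<union> (V - F)) = cpS B F * cpS B (V - F)"
    by (rule cpS_split, insert fin FV zero, auto simp: B intro: finite_subset)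
  finally show ?thesis .
qed

lemma cpS_rowsum:
  fixes f :: "'a::linorder \<Rightarrow> 'a \<Rightarrow> real"
  assumes fin: "finite V" and c: "c \<in> V" and rs: "\<And>x. x \<in> V \<Longrightarrow> (\<Sum>y\<in>V. f x y) = \<beta>"
  shows "cpS f V = [:-\<beta>, 1:] * cpS (\<lambda>x y. f x y - f c y) (V - {c})"
proof -
  define AP where "AP = (\<lambda>x y. if y \<in> {c} then (\<Sum>w\<in>{w\<in>V. c = y}. f x w) else f x y)"
  define B where "B = (\<lambda>x y. if x \<in> {c} then AP x y else AP x y - AP c y)"
  have "cpS f V = cpS B {c} * cpS B (V - {c})"
    by (rule cpS_block[where r="\<lambda>_. c" and AP=AP], insert fin c rs, auto simp: AP_def B_def)
  also have "cpS B {c} = [:-\<beta>, 1:]" unfolding cpS_single using rs[OF c] by (simp add: B_def AP_def)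
  also have "cpS B (V - {c}) = cpS (\<lambda>x y. f x y - f c y) (V - {c})"
    by (rule cpS_cong, insert fin, auto simp: B_def AP_def)
  finally show ?thesis .
qed

lemma cpS_shift:
  "cpS (\<lambda>x y. f x y + (if x = y then a else 0)) V = pcompose (cpS f V) [:-a, 1:]"
proof -
  let ?vs = "sorted_list_of_set V"
  have hom: "comm_ring_hom (\<lambda>p. p \<circ>\<^sub>p [:-a, 1:])"
    by unfold_locales (auto simp: pcompose_add pcompose_mult pcompose_1)
  have "map_mat (\<lambda>p. p \<circ>\<^sub>p [:-a, 1:]) (char_poly_matrix (matLL f ?vs ?vs))
     = char_poly_matrix (matLL (\<lambda>x y. f x y + (if x = y then a else 0)) ?vs ?vs)"
    by (rule eq_matI, auto simp: char_poly_matrix_def pcompose_pCons nth_eq_iff_index_eq)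
  then show ?thesis unfolding cpS_def char_poly_def
    by (metis comm_ring_hom.hom_det[OF hom])
qed

lemma cpS_negshift:
  assumes fin: "finite V"
  shows "cpS (\<lambda>x y. (if x = y then a else 0) - f x y) V = (-1) ^ card V * pcompose (cpS f V) [:a, -1:]"
proof -
  let ?vs = "sorted_list_of_set V"
  let ?M = "char_poly_matrix (matLL (\<lambda>x y. (if x = y then a else 0) - f x y) ?vs ?vs)"
  have hom: "comm_ring_hom (\<lambda>p. p \<circ>\<^sub>p [:a, -1:])"
    by unfold_locales (auto simp: pcompose_add pcompose_mult pcompose_1)
  have "map_mat (\<lambda>p. p \<circ>\<^sub>p [:a, -1:]) (char_poly_matrix (matLL f ?vs ?vs))
     = (-1) \<cdot>\<^sub>m ?M"
    by (rule eq_matI, auto simp: char_poly_matrix_def pcompose_pCons nth_eq_iff_index_eq)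
  then have "pcompose (cpS f V) [:a, -1:] = det ((-1) \<cdot>\<^sub>m ?M)" unfolding cpS_def char_poly_def
    by (metis comm_ring_hom.hom_det[OF hom])
  also have "\<dots> = (-1) ^ card V * det ?M" using fin by (simp add: char_poly_matrix_def)
  finally have "pcompose (cpS f V) [:a, -1:] = (-1) ^ card V * cpS (\<lambda>x y. (if x = y then a else 0) - f x y) V"
    unfolding cpS_def char_poly_def .
  then have "(-1) ^ card V * pcompose (cpS f V) [:a, -1:] = ((-1) ^ card V * (-1) ^ card V) * cpS (\<lambda>x y. (if x = y then a else 0) - f x y) V"
    by (simp add: mult.assoc)
  also have "(-1) ^ card V * (-1) ^ card V = (1 :: real poly)" by (simp add: power_add[symmetric])
  finally show ?thesis by simp
qed

definition PM :: "real multiset \<Rightarrow> real poly" where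
  "PM \<sigma> = prod_mset (image_mset (\<lambda>x. [:-x, 1:]) \<sigma>)"

lemma PM_empty[simp]: "PM {#} = 1" and PM_add[simp]: "PM (add_mset x \<sigma>) = [:-x, 1:] * PM \<sigma>"
  and PM_plus: "PM (\<sigma> + \<tau>) = PM \<sigma> * PM \<tau>"
  by (auto simp: PM_def)

lemma lin_shift: "(pcompose [:-x, 1:] [:-a, 1:] :: real poly) = [:-(x + a), 1:]"
  by (rule poly_eqI) (simp add: poly_pcompose algebra_simps)

lemma lin_neg: "(pcompose [:-x, 1:] [:a, -1:] :: real poly) = (-1) * [:-(a - x), 1:]"
  by (rule poly_eqI) (simp add: poly_pcompose algebra_simps)

lemma PM_shift: "pcompose (PM \<sigma>) [:-a, 1:] = PM (image_mset (\<lambda>x. x + a) \<sigma>)"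
  by (induction \<sigma>, simp, simp only: PM_add image_mset_add_mset pcompose_mult lin_shift)

lemma PM_neg: "pcompose (PM \<sigma>) [:a, -1:] = (-1) ^ size \<sigma> * PM (image_mset (\<lambda>x. a - x) \<sigma>)"
  by (induction \<sigma>, simp, simp only: PM_add image_mset_add_mset pcompose_mult lin_neg size_add_mset power_Suc mult_ac)

lemma poly_PM: "poly (PM \<sigma>) x = 0 \<longleftrightarrow> x \<in># \<sigma>"
  by (induction \<sigma>, auto)

lemma PM_nz: "PM \<sigma> \<noteq> 0"
  by (induction \<sigma>) (simp_all only: PM_empty PM_add mult_eq_0_iff, simp_all)

lemma degree_PM: "degree (PM \<sigma>) = size \<sigma>"
proof (induction \<sigma>)
  case (add x \<sigma>)
  have "degree ([:-x, 1:] * PM \<sigma>) = degree [:-x, 1:] + degree (PM \<sigma>)"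
    by (rule degree_mult_eq) (auto simp: PM_nz)
  then show ?case using add by simp
qed simp

lemma PM_inj: "PM \<sigma> = PM \<tau> \<Longrightarrow> \<sigma> = \<tau>"
proof (induction \<sigma> arbitrary: \<tau>)
  case empty
  then have "size \<tau> = 0" using degree_PM[of \<tau>] by simp
  then show ?case by simp
next
  case (add x \<sigma>)
  have "poly (PM \<tau>) x = 0" using add.prems[symmetric] by simp
  then have x: "x \<in># \<tau>" by (simp add: poly_PM)
  then have t: "\<tau> = add_mset x (\<tau> - {#x#})" by simp
  have "[:-x, 1:] * PM \<sigma> = [:-x, 1:] * PM (\<tau> - {#x#})" using add.prems by (subst (asm) t, simp)
  then have "PM \<sigma> = PM (\<tau> - {#x#})" by (subst (asm) mult_cancel_left, simp)
  then have "\<sigma> = \<tau> - {#x#}" by (rule add.IH)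
  then show ?case using t by simp
qed

lemma mspec_eq: "char_poly A = PM \<sigma> \<Longrightarrow> mspec A = \<sigma>"
  unfolding mspec_def PM_def[symmetric]
  by (rule the_equality, auto intro: PM_inj)

lemma degree_cpS: "finite V \<Longrightarrow> degree (cpS f V) = card V"
  unfolding cpS_def by (subst degree_monic_char_poly[of _ "card V"], auto)

lemma cpS_PM_size: "finite V \<Longrightarrow> cpS f V = PM \<sigma> \<Longrightarrow> size \<sigma> = card V"
  using degree_cpS[of V f] degree_PM[of \<sigma>] by simp

lemma sym_eigen_real:
  fixes A :: "real mat"
  assumes A: "A \<in> carrier_mat n n" and sym: "\<And>i j. i < n \<Longrightarrow> j < n \<Longrightarrow> A $$ (i,j) = A $$ (j,i)"
    and ev: "eigenvector (map_mat complex_of_real A) v a"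
  shows "cnj a = a"
proof -
  let ?Ac = "map_mat complex_of_real A"
  have v: "v \<in> carrier_vec n" and v0: "v \<noteq> 0\<^sub>v n" and eq: "?Ac *\<^sub>v v = a \<cdot>\<^sub>v v"
    using ev A unfolding eigenvector_def by auto
  have eqi: "(\<Sum>j<n. complex_of_real (A $$ (i,j)) * v $ j) = a * v $ i" if i: "i < n" for i
  proof -
    have "(?Ac *\<^sub>v v) $ i = (a \<cdot>\<^sub>v v) $ i" using eq by simp
    then show ?thesis using i A v by (simp add: mult_mat_vec_def scalar_prod_def row_def lessThan_atLeast0)
  qed
  define s where "s = (\<Sum>i<n. cnj (v $ i) * (\<Sum>j<n. complex_of_real (A $$ (i,j)) * v $ j))"
  define t where "t = (\<Sum>i<n. cnj (v $ i) * v $ i)"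
  have st: "s = a * t" unfolding s_def t_def using eqi by (simp add: sum_distrib_left mult_ac)
  have "cnj s = (\<Sum>i<n. \<Sum>j<n. v $ i * complex_of_real (A $$ (i,j)) * cnj (v $ j))"
    unfolding s_def by (simp add: sum_distrib_left mult_ac)
  also have "\<dots> = (\<Sum>j<n. \<Sum>i<n. v $ i * complex_of_real (A $$ (i,j)) * cnj (v $ j))" by (rule sum.swap)
  also have "\<dots> = s" unfolding s_def using sym by (simp add: sum_distrib_left mult_ac)
  finally have cs: "cnj s = s" .
  have nz: "\<And>z. cnj z * z = complex_of_real ((cmod z)\<^sup>2)" by (metis complex_norm_square mult.commute)
  have tr: "t = complex_of_real (\<Sum>i<n. (cmod (v $ i))\<^sup>2)"
    unfolding t_def of_real_sum nz ..
  have "\<exists>i<n. v $ i \<noteq> 0"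
  proof (rule ccontr)
    assume "\<not> (\<exists>i<n. v $ i \<noteq> 0)"
    then have "v = 0\<^sub>v n" using v by (intro eq_vecI) auto
    with v0 show False by simp
  qed
  then obtain i where i: "i < n" and vi: "v $ i \<noteq> 0" by blast
  have "(\<Sum>i<n. (cmod (v $ i))\<^sup>2) > 0"
  proof -
    have "(\<Sum>i<n. (cmod (v $ i))\<^sup>2) \<ge> (cmod (v $ i))\<^sup>2"
      by (rule member_le_sum, insert i, auto)
    moreover have "(cmod (v $ i))\<^sup>2 > 0" using vi by simp
    ultimately show ?thesis by linarith
  qed
  then have t0: "t \<noteq> 0" unfolding tr by (metis of_real_0 of_real_eq_iff less_irrefl)
  have ct: "cnj t = t" unfolding tr by (simp only: complex_cnj_complex_of_real)
  have "cnj a * t = a * t" using cs st ct by (metis complex_cnj_mult)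
  then show ?thesis using t0 by simp
qed

lemma sym_split:
  fixes A :: "real mat"
  assumes A: "A \<in> carrier_mat n n" and sym: "\<And>i j. i < n \<Longrightarrow> j < n \<Longrightarrow> A $$ (i,j) = A $$ (j,i)"
  shows "\<exists>\<sigma>. char_poly A = PM \<sigma>"
proof -
  let ?Ac = "map_mat complex_of_real A"
  have Ac: "?Ac \<in> carrier_mat n n" using A by auto
  obtain as where fac: "char_poly ?Ac = (\<Prod>a\<leftarrow>as. [:- a, 1:])" using char_poly_factorized[OF Ac] by auto
  have real: "cnj a = a" if a: "a \<in> set as" for a
  proof -
    have "poly (char_poly ?Ac) a = 0" unfolding fac using a by (auto simp: poly_prod_list prod_list_zero_iff)
    then have "eigenvalue ?Ac a" using eigenvalue_root_char_poly[OF Ac] by simp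
    then obtain v where "eigenvector ?Ac v a" unfolding eigenvalue_def by auto
    then show ?thesis using sym_eigen_real[OF A] sym by blast
  qed
  define bs where "bs = map Re as"
  interpret rh: map_poly_inj_idom_hom "of_real :: real \<Rightarrow> complex" ..
  have "map_poly complex_of_real (char_poly A) = char_poly ?Ac"
    by (rule of_real_hom.char_poly_hom[OF A, symmetric])
  also have "\<dots> = (\<Prod>a\<leftarrow>as. [:- a, 1:])" by (rule fac)
  also have "as = map complex_of_real bs"
    unfolding bs_def using real by (induction as) (auto simp: complex_eq_iff)
  also have "(\<Prod>a\<leftarrow>map complex_of_real bs. [:- a, 1:]) = (\<Prod>b\<leftarrow>bs. [:- complex_of_real b, 1:])"
    by (induction bs, auto)
  also have "\<dots> = map_poly complex_of_real (\<Prod>b\<leftarrow>bs. [:- b, 1:])"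
    by (simp add: rh.hom_prod_list o_def)
  finally have "char_poly A = (\<Prod>b\<leftarrow>bs. [:- b, 1:])" by (simp only: rh.eq_iff)
  also have "\<dots> = PM (mset bs)" unfolding PM_def by (induction bs, auto)
  finally show ?thesis by blast
qed

definition Lap :: "('a \<times> 'a) set \<Rightarrow> 'a set \<Rightarrow> 'a \<Rightarrow> 'a \<Rightarrow> real" where
  "Lap E V x y = (if x = y then real (card {z\<in>V. (x,z) \<in> E}) else if (x,y) \<in> E then -1 else 0)"

lemma card_nth_filter:
  assumes "distinct vs"
  shows "card {k. k < length vs \<and> P (vs ! k)} = card {z\<in>set vs. P z}"
proof -
  have "{z\<in>set vs. P z} = (\<lambda>k. vs ! k) ` {k. k < length vs \<and> P (vs ! k)}"
    by (auto simp: in_set_conv_nth)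
  moreover have "inj_on (\<lambda>k. vs ! k) {k. k < length vs \<and> P (vs ! k)}"
    using assms by (auto simp: inj_on_def nth_eq_iff_index_eq)
  ultimately show ?thesis by (simp add: card_image)
qed

lemma laplacian_Lap:
  assumes "distinct vs"
  shows "laplacian_mat vs E = matLL (Lap E (set vs)) vs vs"
proof (rule eq_matI)
  fix i j assume "i < dim_row (matLL (Lap E (set vs)) vs vs)" "j < dim_col (matLL (Lap E (set vs)) vs vs)"
  then have i: "i < length vs" and j: "j < length vs" by auto
  show "laplacian_mat vs E $$ (i, j) = matLL (Lap E (set vs)) vs vs $$ (i, j)"
    using i j assms card_nth_filter[OF assms, of "\<lambda>z. (vs ! i, z) \<in> E"]
    by (auto simp: laplacian_mat_def Lap_def nth_eq_iff_index_eq)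
qed (auto simp: laplacian_mat_def)

lemma Lap_rowsum:
  assumes fin: "finite V" and x: "x \<in> V" and irr: "(x,x) \<notin> E"
  shows "(\<Sum>y\<in>V. Lap E V x y) = 0"
proof -
  have "(\<Sum>y\<in>V. Lap E V x y) = Lap E V x x + (\<Sum>y\<in>V - {x}. Lap E V x y)"
    using fin x by (simp add: sum.remove)
  also have "(\<Sum>y\<in>V - {x}. Lap E V x y) = (\<Sum>y\<in>V - {x}. if (x,y) \<in> E then -1 else 0)"
    by (rule sum.cong, auto simp: Lap_def)
  also have "\<dots> = - real (card ((V - {x}) \<inter> {y. (x,y) \<in> E}))"
    using fin by (simp add: sum.If_cases)
  also have "(V - {x}) \<inter> {y. (x,y) \<in> E} = {z\<in>V. (x,z) \<in> E}" using irr by auto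
  finally show ?thesis by (simp add: Lap_def)
qed

lemma distinct_concat_disj:
  assumes "distinct (concat xs)" "i < length xs" "j < length xs" "i \<noteq> j"
  shows "set (xs ! i) \<inter> set (xs ! j) = {}"
  using assms
proof (induction xs arbitrary: i j)
  case (Cons a xs)
  show ?case
  proof (cases i)
    case 0
    then obtain j' where j: "j = Suc j'" using Cons by (cases j, auto)
    then have "set (xs ! j') \<subseteq> set (concat xs)" using Cons.prems by (auto simp: nth_mem)
    then show ?thesis using Cons.prems 0 j by auto
  next
    case (Suc i')
    show ?thesis
    proof (cases j)
      case 0
      then have "set (xs ! i') \<subseteq> set (concat xs)" using Cons.prems Suc by (auto simp: nth_mem)
      then show ?thesis using Cons.prems 0 Suc by auto
    next
      case (Suc j')
      then show ?thesis using Cons \<open>i = Suc i'\<close> by auto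
    qed
  qed
qed simp

lemma distinct_concat_nth: "distinct (concat xs) \<Longrightarrow> i < length xs \<Longrightarrow> distinct (xs ! i)"
  by (metis distinct_concat_iff nth_mem)

lemma leaves_nonempty: "wf_ctree t \<Longrightarrow> leaves t \<noteq> []"
proof (induction t)
  case (Node G ts)
  then obtain t where "t \<in> set ts" by (cases ts, auto)
  then show ?case using Node by auto
qed simp

lemma edges_sub: "comp_edges t \<subseteq> set (leaves t) \<times> set (leaves t)"
proof (induction t)
  case (Node G ts)
  then show ?case by (fastforce simp: nth_mem)
qed simp

lemma edges_irrefl: "wf_ctree t \<Longrightarrow> distinct (leaves t) \<Longrightarrow> (x,x) \<notin> comp_edges t"
proof (induction t)
  case (Node G ts)
  have d: "distinct (concat (map leaves ts))" using Node.prems by simp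
  show ?case
  proof
    assume "(x,x) \<in> comp_edges (Node G ts)"
    then consider t where "t \<in> set ts" "(x,x) \<in> comp_edges t"
      | i j where "(i,j) \<in> G" "i < length ts" "j < length ts" "x \<in> set (leaves (ts!i))" "x \<in> set (leaves (ts!j))"
      by auto
    then show False
    proof cases
      case 1
      then show False using Node d by (auto simp: distinct_concat_iff)
    next
      case 2
      then have "i = j" using distinct_concat_disj[OF d, of i j] by auto
      then show False using 2 Node.prems by auto
    qed
  qed
qed simp

lemma edges_sym: "wf_ctree t \<Longrightarrow> (x,y) \<in> comp_edges t \<Longrightarrow> (y,x) \<in> comp_edges t"
proof (induction t arbitrary: x y)
  case (Node G ts)
  then show ?case by (auto dest: symD)
qed simp


function mu :: "'a stree \<Rightarrow> real multiset" where
  "mu (Leaf x) = {#}"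
| "mu (Node G ts) = (mspec (qlap G ts) - {#0#}) +
     sum_list (map (\<lambda>(i, t). image_mset (\<lambda>x. x + Nbr G ts i) (mu t)) (zip [0..<length ts] ts))"
  by pat_completeness auto
termination
  by (relation "measure size")
     (auto dest!: set_zip_rightD simp: le_imp_less_Suc size_list_estimation')

lemma sum_list_zip_idx:
  "sum_list (map h (zip [0..<length ts] ts)) = (\<Sum>i<length ts. h (i, ts ! i))"
  by (subst sum_list_sum_nth) (simp add: atLeast0LessThan)

lemma mu_Node: "mu (Node G ts) = (mspec (qlap G ts) - {#0#}) +
     (\<Sum>i<length ts. image_mset (\<lambda>x. x + Nbr G ts i) (mu (ts ! i)))"
  by (simp add: sum_list_zip_idx)

lemma PM_sum: "finite A \<Longrightarrow> PM (\<Sum>i\<in>A. X i) = (\<Prod>i\<in>A. PM (X i))"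
  by (induction A rule: finite_induct) (auto simp: PM_plus)

lemma diag_sum_l: "finite A \<Longrightarrow> x \<in> A \<Longrightarrow> (\<Sum>z\<in>A. (if x = z then a else 0) * h z) = a * (h x :: real)"
proof -
  assume "finite A" "x \<in> A"
  moreover have "\<And>z. (if x = z then a else 0) * h z = (if x = z then a * h z else 0)" by simp
  ultimately show ?thesis by (simp add: sum.delta)
qed

lemma diag_sum_r: "finite A \<Longrightarrow> y \<in> A \<Longrightarrow> (\<Sum>z\<in>A. h z * (if z = y then b z else 0)) = h y * (b y :: real)"
proof -
  assume "finite A" "y \<in> A"
  moreover have "\<And>z. h z * (if z = y then b z else 0) = (if z = y then h z * b z else 0)" by simp
  ultimately show ?thesis by (simp add: sum.delta')
qed

context
  fixes G :: "(nat \<times> nat) set" and ts :: "'a::linorder stree list"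
  assumes wf: "wf_ctree (Node G ts)" and dist: "distinct (leaves (Node G ts))"
begin

declare comp_edges.simps(2)[simp del] leaves.simps(2)[simp del]

abbreviation "VV i \<equiv> set (leaves (ts ! i))"
abbreviation "EE i \<equiv> comp_edges (ts ! i)"
abbreviation "VN \<equiv> set (leaves (Node G ts))"
abbreviation "EN \<equiv> comp_edges (Node G ts)"
definition "NN i = real (\<Sum>j\<in>{j. j < length ts \<and> (i,j) \<in> G}. card (VV j))"

lemma nd_k2: "length ts \<ge> 2" and nd_symG: "sym G" and nd_irrG: "(i,i) \<notin> G"
  and nd_Gsub: "G \<subseteq> {0..<length ts} \<times> {0..<length ts}"
  using wf by auto

lemma nd_leaves: "leaves (Node G ts) = concat (map leaves ts)"
  by (simp add: leaves.simps)

lemma nd_edges: "EN = (\<Union>t\<in>set ts. comp_edges t) \<union>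
     {(x, y). \<exists>i j. (i, j) \<in> G \<and> i < length ts \<and> j < length ts \<and>
                     x \<in> set (leaves (ts ! i)) \<and> y \<in> set (leaves (ts ! j))}"
  by (simp add: comp_edges.simps)

lemma nd_wfc: "i < length ts \<Longrightarrow> wf_ctree (ts ! i)"
  using wf by (auto simp: nth_mem)

lemma nd_dc: "i < length ts \<Longrightarrow> distinct (leaves (ts ! i))"
  using dist distinct_concat_nth[of "map leaves ts" i] by (auto simp: nd_leaves)

lemma nd_disj: "i < length ts \<Longrightarrow> j < length ts \<Longrightarrow> i \<noteq> j \<Longrightarrow> VV i \<inter> VV j = {}"
  using dist distinct_concat_disj[of "map leaves ts" i j] by (auto simp: nd_leaves)

lemma nd_VN: "VN = (\<Union>i<length ts. VV i)"
proof -
  have "VN = (\<Union>t\<in>set ts. set (leaves t))" by (simp add: nd_leaves)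
  also have "set ts = (\<lambda>i. ts ! i) ` {..<length ts}" by (auto simp: in_set_conv_nth)
  finally show ?thesis by simp
qed

lemma nd_edge_iff:
  assumes i: "i < length ts" and j: "j < length ts" and x: "x \<in> VV i" and y: "y \<in> VV j"
  shows "(x,y) \<in> EN \<longleftrightarrow> (i = j \<and> (x,y) \<in> EE i) \<or> (i,j) \<in> G"
proof
  assume "(x,y) \<in> EN"
  then consider t where "t \<in> set ts" "(x,y) \<in> comp_edges t"
    | i' j' where "(i',j') \<in> G" "i' < length ts" "j' < length ts" "x \<in> VV i'" "y \<in> VV j'"
    unfolding nd_edges by auto
  then show "(i = j \<and> (x,y) \<in> EE i) \<or> (i,j) \<in> G"
  proof cases
    case 1
    then obtain l where l: "l < length ts" "t = ts ! l" by (auto simp: in_set_conv_nth)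
    then have "x \<in> VV l" "y \<in> VV l" using 1 edges_sub[of t] by auto
    then have "l = i" "l = j" using nd_disj x y i j l by blast+
    then show ?thesis using 1 l by auto
  next
    case 2
    then have "i' = i" "j' = j" using nd_disj x y i j by blast+
    then show ?thesis using 2 by auto
  qed
next
  assume "(i = j \<and> (x,y) \<in> EE i) \<or> (i,j) \<in> G"
  then show "(x,y) \<in> EN" using i j x y unfolding nd_edges by (auto simp: nth_mem)
qed

lemma nd_deg:
  assumes i: "i < length ts" and x: "x \<in> VV i"
  shows "card {z\<in>VN. (x,z) \<in> EN} = card {z\<in>VV i. (x,z) \<in> EE i} + (\<Sum>j\<in>{j. j < length ts \<and> (i,j) \<in> G}. card (VV j))"
proof -
  let ?J = "{j. j < length ts \<and> (i,j) \<in> G}"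
  have "{z\<in>VN. (x,z) \<in> EN} = {z\<in>VV i. (x,z) \<in> EE i} \<union> (\<Union>j\<in>?J. VV j)"
  proof (intro equalityI subsetI)
    fix z assume "z \<in> {z\<in>VN. (x,z) \<in> EN}"
    then obtain j where j: "j < length ts" "z \<in> VV j" and e: "(x,z) \<in> EN" unfolding nd_VN by auto
    then show "z \<in> {z\<in>VV i. (x,z) \<in> EE i} \<union> (\<Union>j\<in>?J. VV j)"
      using nd_edge_iff[OF i j(1) x j(2)] by auto
  next
    fix z assume z: "z \<in> {z\<in>VV i. (x,z) \<in> EE i} \<union> (\<Union>j\<in>?J. VV j)"
    then obtain j where j: "j < length ts" "z \<in> VV j" "(i = j \<and> (x,z) \<in> EE i) \<or> (i,j) \<in> G"
      using i by auto
    then show "z \<in> {z\<in>VN. (x,z) \<in> EN}"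
      using nd_edge_iff[OF i j(1) x j(2)] unfolding nd_VN by auto
  qed
  also have "card \<dots> = card {z\<in>VV i. (x,z) \<in> EE i} + card (\<Union>j\<in>?J. VV j)"
  proof (rule card_Un_disjoint)
    show "{z\<in>VV i. (x,z) \<in> EE i} \<inter> (\<Union>j\<in>?J. VV j) = {}"
      using nd_disj i nd_irrG by fastforce
  qed auto
  also have "card (\<Union>j\<in>?J. VV j) = (\<Sum>j\<in>?J. card (VV j))"
    by (rule card_UN_disjoint, auto, insert nd_disj, blast+)
  finally show ?thesis .
qed

lemma nd_M_off:
  assumes i: "i < length ts" and j: "j < length ts" and ij: "i \<noteq> j" and x: "x \<in> VV i" and y: "y \<in> VV j"
  shows "Lap EN VN x y = (if (i,j) \<in> G then -1 else 0)"
proof -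
  have "x \<noteq> y" using nd_disj[OF i j ij] x y by auto
  then show ?thesis using nd_edge_iff[OF i j x y] ij by (simp add: Lap_def)
qed

lemma nd_M_in:
  assumes i: "i < length ts" and x: "x \<in> VV i" and y: "y \<in> VV i"
  shows "Lap EN VN x y = Lap (EE i) (VV i) x y + (if x = y then NN i else 0)"
proof (cases "x = y")
  case True
  then show ?thesis unfolding Lap_def NN_def using nd_deg[OF i x] by simp
next
  case False
  then show ?thesis unfolding Lap_def using nd_edge_iff[OF i i x y] nd_irrG[of i] by simp
qed

lemma nd_BS:
  assumes i: "i < length ts" and j: "j < length ts" and x: "x \<in> VV i"
  shows "(\<Sum>w\<in>VV j. Lap EN VN x w) = (if i = j then NN i else if (i,j) \<in> G then - real (card (VV j)) else 0)"
proof (cases "i = j")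
  case True
  have "(\<Sum>w\<in>VV j. Lap EN VN x w) = (\<Sum>w\<in>VV i. Lap (EE i) (VV i) x w + (if x = w then NN i else 0))"
    using True nd_M_in[OF i x] by (intro sum.cong) auto
  also have "\<dots> = (\<Sum>w\<in>VV i. Lap (EE i) (VV i) x w) + NN i"
    using x by (simp add: sum.distrib)
  also have "(\<Sum>w\<in>VV i. Lap (EE i) (VV i) x w) = 0"
    by (rule Lap_rowsum, insert x edges_irrefl[OF nd_wfc[OF i] nd_dc[OF i]], auto)
  finally show ?thesis using True by simp
next
  case False
  have "(\<Sum>w\<in>VV j. Lap EN VN x w) = (\<Sum>w\<in>VV j. (if (i,j) \<in> G then -1 else 0))"
    using nd_M_off[OF i j False x] by (intro sum.cong) auto
  then show ?thesis using False by (simp add: distinct_card)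
qed

lemma nd_NN: "i < length ts \<Longrightarrow> NN i = Nbr G ts i"
proof -
  assume i: "i < length ts"
  have "{s. s < length ts \<and> (s, i) \<in> G} = {j. j < length ts \<and> (i,j) \<in> G}"
    using nd_symG by (auto dest: symD)
  moreover have "csize ts j = real (card (VV j))" if "j < length ts" for j
    using nd_dc[OF that] by (simp add: csize_def distinct_card)
  ultimately show ?thesis unfolding NN_def Nbr_def by (simp add: of_nat_sum)
qed


lemma nd_step:
  assumes IH: "\<And>i. i < length ts \<Longrightarrow> cpS (Lap (EE i) (VV i)) (VV i) = PM (add_mset 0 (mu (ts ! i)))"
  shows "cpS (Lap EN VN) VN = PM (add_mset 0 (mu (Node G ts)))"
proof -
  let ?k = "length ts"
  define c where "c i = hd (leaves (ts ! i))" for i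
  have cV: "c i \<in> VV i" if "i < ?k" for i
    using leaves_nonempty[OF nd_wfc[OF that]] by (simp add: c_def)
  define blk where "blk x = (THE i. i < ?k \<and> x \<in> VV i)" for x
  have blk: "blk x = i" if "i < ?k" "x \<in> VV i" for i x
    unfolding blk_def
  proof (rule the_equality)
    show "i < ?k \<and> x \<in> VV i" using that by simp
    fix j assume "j < ?k \<and> x \<in> VV j"
    then show "j = i" using nd_disj[of j i] that by auto
  qed
  have c_inj: "i = j" if "i < ?k" "j < ?k" "c i = c j" for i j
    using nd_disj[of i j] cV[of i] cV[of j] that by (rule_tac ccontr, auto)
  define F where "F = c ` {..<?k}"
  define r where "r x = c (blk x)" for x
  define M where "M = Lap EN VN"
  define AP where "AP = (\<lambda>x y. if y \<in> F then (\<Sum>w\<in>{w\<in>VN. r w = y}. M x w) else M x y)"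
  define B where "B = (\<lambda>x y. if x \<in> F then AP x y else AP x y - AP (r x) y)"
  define Qp where "Qp i j = (if i = j then NN i else if (i,j) \<in> G then - real (card (VV j)) else 0)" for i j
  have finV: "finite VN" by simp
  have VNi: "\<exists>i<?k. x \<in> VV i" if "x \<in> VN" for x using that unfolding nd_VN by auto
  have inVN: "x \<in> VN" if "i < ?k" "x \<in> VV i" for i x using that unfolding nd_VN by auto
  have r_eq: "r x = c i" if "i < ?k" "x \<in> VV i" for i x using blk[OF that] by (simp add: r_def)
  have Sc: "{w\<in>VN. r w = c j} = VV j" if j: "j < ?k" for j
  proof (intro equalityI subsetI)
    fix w assume "w \<in> {w\<in>VN. r w = c j}"
    then obtain i where i: "i < ?k" "w \<in> VV i" and "r w = c j" using VNi by auto
    then have "c i = c j" using r_eq by simp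
    then show "w \<in> VV j" using c_inj[OF i(1) j] i by simp
  next
    fix w assume "w \<in> VV j"
    then show "w \<in> {w\<in>VN. r w = c j}" using inVN[OF j] r_eq[OF j] by auto
  qed
  have APc: "AP x (c j) = Qp i j" if i: "i < ?k" and j: "j < ?k" and x: "x \<in> VV i" for i j x
  proof -
    have "c j \<in> F" using j by (simp add: F_def)
    then have "AP x (c j) = (\<Sum>w\<in>VV j. M x w)" by (simp add: AP_def Sc[OF j])
    also have "\<dots> = Qp i j" unfolding M_def Qp_def by (rule nd_BS[OF i j x])
    finally show ?thesis .
  qed
  have notF: "x \<notin> F" if "i < ?k" "x \<in> VV i" "x \<noteq> c i" for i x
  proof
    assume "x \<in> F"
    then obtain l where l: "l < ?k" "x = c l" by (auto simp: F_def)
    then have "l = i" using cV[OF l(1)] that nd_disj by blast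
    then show False using l that by simp
  qed
  have split: "cpS M VN = cpS B F * cpS B (VN - F)"
  proof (rule cpS_block[OF finV, where r=r and AP=AP])
    show "F \<subseteq> VN" using cV inVN by (auto simp: F_def)
    show "r x \<in> F" if "x \<in> VN" for x using VNi[OF that] r_eq by (auto simp: F_def)
    show "r y = y" if "y \<in> F" for y using that cV r_eq by (auto simp: F_def)
    show "AP = (\<lambda>x y. if y \<in> F then \<Sum>w\<in>{w \<in> VN. r w = y}. M x w else M x y)" by (simp add: AP_def)
    show "B = (\<lambda>x y. if x \<in> F then AP x y else AP x y - AP (r x) y)" by (simp add: B_def)
    show "AP x y = AP (r x) y" if x: "x \<in> VN - F" and y: "y \<in> F" for x y
    proof -
      obtain i where i: "i < ?k" "x \<in> VV i" using VNi x by auto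
      obtain j where j: "j < ?k" "y = c j" using y by (auto simp: F_def)
      show ?thesis using APc[OF i(1) j(1) i(2)] APc[OF i(1) j(1) cV[OF i(1)]] r_eq[OF i] j by simp
    qed
  qed
  have cs: "distinct (map c [0..<?k])" "set (map c [0..<?k]) = F"
    using c_inj by (auto simp: distinct_map inj_on_def F_def)
  have BF: "cpS B F = cpS Qp {..<?k}"
  proof -
    have "cpS B F = char_poly (matLL B (map c [0..<?k]) (map c [0..<?k]))" by (rule cpS_list[OF cs])
    also have "matLL B (map c [0..<?k]) (map c [0..<?k]) = matLL Qp [0..<?k] [0..<?k]"
    proof (rule eq_matI)
      fix a b assume "a < dim_row (matLL Qp [0..<?k] [0..<?k])" "b < dim_col (matLL Qp [0..<?k] [0..<?k])"
      then have a: "a < ?k" and b: "b < ?k" by auto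
      have "c a \<in> F" using a by (simp add: F_def)
      then show "matLL B (map c [0..<?k]) (map c [0..<?k]) $$ (a, b) = matLL Qp [0..<?k] [0..<?k] $$ (a, b)"
        using a b APc[OF a b cV[OF a]] by (simp add: B_def)
    qed auto
    also have "char_poly \<dots> = cpS Qp {..<?k}" by (rule cpS_list[symmetric], auto)
    finally show ?thesis .
  qed
  have cs_pos: "csize ts i > 0" if "i < ?k" for i
    using leaves_nonempty[OF nd_wfc[OF that]] by (simp add: csize_def)
  have cs_card: "csize ts i = real (card (VV i))" if "i < ?k" for i
    using nd_dc[OF that] by (simp add: csize_def distinct_card)
  define ql where "ql i j = (if i = j then Nbr G ts i else if (i, j) \<in> G then - sqrt (csize ts i * csize ts j) else 0)" for i j
  have qlap_eq: "qlap G ts = matLL ql [0..<?k] [0..<?k]"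
    by (rule eq_matI, auto simp: qlap_def ql_def)
  have QQ: "cpS Qp {..<?k} = char_poly (qlap G ts)"
  proof -
    have "cpS Qp {..<?k} = char_poly (matLL Qp [0..<?k] [0..<?k])" by (rule cpS_list, auto)
    also have "\<dots> = char_poly (matLL ql [0..<?k] [0..<?k])"
    proof (rule sim_matLL[where p="\<lambda>x z. if x = z then 1 / sqrt (csize ts x) else 0"
                                 and q="\<lambda>x z. if x = z then sqrt (csize ts x) else 0"])
      fix x y assume x: "x \<in> set [0..<?k]" and y: "y \<in> set [0..<?k]"
      have px: "csize ts x > 0" using cs_pos x by auto
      have py: "csize ts y > 0" using cs_pos y by auto
      show "(\<Sum>z\<in>set [0..<?k]. (if x = z then 1 / sqrt (csize ts x) else 0) * (if z = y then sqrt (csize ts z) else 0)) = (if x = y then 1 else 0)"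
        using x px by (subst diag_sum_l, auto)
      show "(\<Sum>z\<in>set [0..<?k]. (if x = z then sqrt (csize ts x) else 0) * (if z = y then 1 / sqrt (csize ts z) else 0)) = (if x = y then 1 else 0)"
        using x px by (subst diag_sum_l, auto)
      have "(\<Sum>z\<in>set [0..<?k]. (if x = z then 1 / sqrt (csize ts x) else 0) * ql z y) = ql x y / sqrt (csize ts x)"
        using x by (subst diag_sum_l, auto)
      also have "\<dots> = Qp x y / sqrt (csize ts y)"
      proof -
        have "sqrt (csize ts x * csize ts y) / sqrt (csize ts x) = csize ts y / sqrt (csize ts y)"
          using px py by (simp add: real_sqrt_mult field_simps)
        then show ?thesis using x y nd_NN[of x] cs_card[of y] by (auto simp: ql_def Qp_def)
      qed
      also have "\<dots> = (\<Sum>z\<in>set [0..<?k]. Qp x z * (if z = y then 1 / sqrt (csize ts z) else 0))"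
        using y by (subst diag_sum_r, auto)
      finally show "(\<Sum>z\<in>set [0..<?k]. (if x = z then 1 / sqrt (csize ts x) else 0) * ql z y) = (\<Sum>z\<in>set [0..<?k]. Qp x z * (if z = y then 1 / sqrt (csize ts z) else 0))" .
    qed auto
    finally show ?thesis using qlap_eq by simp
  qed
  have qsym: "qlap G ts $$ (i, j) = qlap G ts $$ (j, i)" if "i < ?k" "j < ?k" for i j
    using that nd_symG by (auto simp: qlap_def mult.commute dest: symD)
  obtain \<sigma> where \<sigma>: "char_poly (qlap G ts) = PM \<sigma>"
    using sym_split[of "qlap G ts" ?k] qsym by (auto simp: qlap_def)
  have ms: "mspec (qlap G ts) = \<sigma>" by (rule mspec_eq[OF \<sigma>])
  have rowQ: "(\<Sum>b\<in>{..<?k}. Qp a b) = 0" if a: "a < ?k" for a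
  proof -
    have "(\<Sum>b\<in>{..<?k}. Qp a b) = (\<Sum>b\<in>{..<?k}. (if b = a then NN a else 0) + (if (a, b) \<in> G then - real (card (VV b)) else 0))"
      using nd_irrG[of a] by (intro sum.cong, auto simp: Qp_def)
    also have "\<dots> = NN a - (\<Sum>b\<in>{b. b < ?k \<and> (a,b) \<in> G}. real (card (VV b)))"
      using a by (simp add: sum.distrib sum.If_cases sum_negf Int_def conj_commute)
    also have "\<dots> = 0" by (simp add: NN_def)
    finally show ?thesis .
  qed
  have zero_in: "0 \<in># \<sigma>"
  proof -
    have "0 < ?k" using nd_k2 by linarith
    then have "cpS Qp {..<?k} = [:-0, 1:] * cpS (\<lambda>x y. Qp x y - Qp 0 y) ({..<?k} - {0})"
      by (intro cpS_rowsum, auto simp: rowQ)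
    then have "poly (cpS Qp {..<?k}) 0 = 0" by simp
    then have "poly (PM \<sigma>) 0 = 0" using QQ \<sigma> by simp
    then show ?thesis by (simp add: poly_PM)
  qed
  have VNF: "VN - F = (\<Union>i<?k. VV i - {c i})"
  proof (intro equalityI subsetI)
    fix x assume x: "x \<in> VN - F"
    then obtain i where i: "i < ?k" "x \<in> VV i" using VNi by auto
    have "x \<noteq> c i" using x i by (auto simp: F_def)
    then show "x \<in> (\<Union>i<?k. VV i - {c i})" using i by auto
  next
    fix x assume "x \<in> (\<Union>i<?k. VV i - {c i})"
    then obtain i where i: "i < ?k" "x \<in> VV i" "x \<noteq> c i" by auto
    then show "x \<in> VN - F" using inVN notF by auto
  qed
  have Bred: "B x y = M x y - M (c i) y" if i: "i < ?k" and x: "x \<in> VV i - {c i}" and y: "y \<notin> F" for i x y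
    using notF[OF i] x y r_eq[OF i] by (simp add: B_def AP_def)
  have BR: "cpS B (VN - F) = (\<Prod>i<?k. cpS B (VV i - {c i}))"
    unfolding VNF
  proof (rule cpS_prod)
    show "finite (VV i - {c i})" for i by simp
    show "(VV i - {c i}) \<inter> (VV j - {c j}) = {}" if "i < ?k" "j < ?k" "i \<noteq> j" for i j
      using nd_disj[OF that] by auto
    show "B x y = 0" if ij: "i < ?k" "j < ?k" "i \<noteq> j" and x: "x \<in> VV i - {c i}" and y: "y \<in> VV j - {c j}" for i j x y
    proof -
      have yF: "y \<notin> F" using notF[OF ij(2)] y by auto
      have "B x y = M x y - M (c i) y" by (rule Bred[OF ij(1) x yF])
      also have "\<dots> = 0" using nd_M_off[OF ij(1) ij(2) ij(3)] x y cV[OF ij(1)] by (simp add: M_def)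
      finally show ?thesis .
    qed
  qed
  have each: "cpS B (VV i - {c i}) = PM (image_mset (\<lambda>x. x + Nbr G ts i) (mu (ts ! i)))" if i: "i < ?k" for i
  proof -
    let ?L = "Lap (EE i) (VV i)"
    have "cpS B (VV i - {c i}) = cpS (\<lambda>x y. (?L x y - ?L (c i) y) + (if x = y then NN i else 0)) (VV i - {c i})"
    proof (rule cpS_cong)
      fix x y assume x: "x \<in> VV i - {c i}" and y: "y \<in> VV i - {c i}"
      have yF: "y \<notin> F" using notF[OF i] y by auto
      show "B x y = (?L x y - ?L (c i) y) + (if x = y then NN i else 0)"
        using Bred[OF i x yF] nd_M_in[OF i, of x y] nd_M_in[OF i cV[OF i], of y] x y
        by (cases "c i = y") (auto simp: M_def)
    qed simp
    also have "\<dots> = pcompose (cpS (\<lambda>x y. ?L x y - ?L (c i) y) (VV i - {c i})) [:- NN i, 1:]"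
      by (rule cpS_shift)
    also have "cpS (\<lambda>x y. ?L x y - ?L (c i) y) (VV i - {c i}) = PM (mu (ts ! i))"
    proof -
      have "cpS ?L (VV i) = [:-0, 1:] * cpS (\<lambda>x y. ?L x y - ?L (c i) y) (VV i - {c i})"
        by (rule cpS_rowsum[OF _ cV[OF i]], simp, rule Lap_rowsum, simp, simp,
            rule edges_irrefl[OF nd_wfc[OF i] nd_dc[OF i]])
      then have "[:0, 1:] * cpS (\<lambda>x y. ?L x y - ?L (c i) y) (VV i - {c i}) = [:0, 1:] * PM (mu (ts ! i))"
        using IH[OF i] by simp
      then show ?thesis by (subst (asm) mult_cancel_left, simp)
    qed
    finally show ?thesis by (simp add: PM_shift nd_NN[OF i])
  qed
  have "cpS (Lap EN VN) VN = PM \<sigma> * (\<Prod>i<?k. PM (image_mset (\<lambda>x. x + Nbr G ts i) (mu (ts ! i))))"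
    using split BF QQ \<sigma> BR each by (simp add: M_def)
  also have "\<dots> = PM (\<sigma> + (\<Sum>i<?k. image_mset (\<lambda>x. x + Nbr G ts i) (mu (ts ! i))))"
    by (simp add: PM_plus PM_sum)
  also have "\<sigma> + (\<Sum>i<?k. image_mset (\<lambda>x. x + Nbr G ts i) (mu (ts ! i))) = add_mset 0 (mu (Node G ts))"
    unfolding mu_Node ms using zero_in by simp
  finally show ?thesis .
qed

end

lemma image_mset_sum_fin: "finite A \<Longrightarrow> image_mset f (\<Sum>i\<in>A. X i) = (\<Sum>i\<in>A. image_mset f (X i))"
  by (induction A rule: finite_induct) auto

lemma tree_lap:
  fixes t :: "'a::linorder stree"
  shows "wf_ctree t \<Longrightarrow> distinct (leaves t) \<Longrightarrow>
    cpS (Lap (comp_edges t) (set (leaves t))) (set (leaves t)) = PM (add_mset 0 (mu t))"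
proof (induction t)
  case (Leaf x)
  have "cpS (Lap (comp_edges (Leaf x)) (set (leaves (Leaf x)))) (set (leaves (Leaf x))) = [:-0, 1:]"
    by (simp add: cpS_single Lap_def)
  then show ?case by simp
next
  case (Node G ts)
  show ?case
  proof (rule nd_step[OF Node.prems])
    fix i assume i: "i < length ts"
    show "cpS (Lap (comp_edges (ts ! i)) (set (leaves (ts ! i)))) (set (leaves (ts ! i))) = PM (add_mset 0 (mu (ts ! i)))"
      by (rule Node.IH[OF nth_mem[OF i] nd_wfc[OF Node.prems i] nd_dc[OF Node.prems i]])
  qed
qed

lemma neg_diff0: "image_mset uminus \<sigma> - {#0::real#} = image_mset uminus (\<sigma> - {#0#})"
proof (cases "0 \<in># \<sigma>")
  case True
  then obtain \<sigma>' where "\<sigma> = add_mset 0 \<sigma>'" by (metis insert_DiffM)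
  then show ?thesis by simp
next
  case False
  then have "0 \<notin># image_mset uminus \<sigma>" by auto
  then show ?thesis using False by simp
qed

lemma tree_part_mu: "tree_part n a t = image_mset (\<lambda>x. real n - a - x) (mu t)"
proof (induction n a t rule: tree_part.induct)
  case (1 n a x)
  then show ?case by simp
next
  case (2 n a G ts)
  have IH: "tree_part n (a + Nbr G ts i) (ts ! i) = image_mset (\<lambda>x. real n - (a + Nbr G ts i) - x) (mu (ts ! i))"
    if i: "i < length ts" for i
  proof -
    have "(i, ts ! i) \<in> set (zip [0..<length ts] ts)" using i by (auto simp: in_set_zip intro!: exI[of _ i])
    then show ?thesis using 2[of "(i, ts ! i)" i "ts ! i"] by simp
  qed
  have "tree_part n a (Node G ts) = phi (real n - a) (neg_ms (mspec (qlap G ts))) +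
     (\<Sum>i<length ts. tree_part n (a + Nbr G ts i) (ts ! i))"
    by (simp add: sum_list_zip_idx)
  also have "phi (real n - a) (neg_ms (mspec (qlap G ts))) = image_mset (\<lambda>x. real n - a - x) (mspec (qlap G ts) - {#0#})"
    unfolding phi_def neg_ms_def neg_diff0 by (simp add: multiset.map_comp o_def)
  also have "(\<Sum>i<length ts. tree_part n (a + Nbr G ts i) (ts ! i))
     = (\<Sum>i<length ts. image_mset (\<lambda>x. real n - a - x) (image_mset (\<lambda>x. x + Nbr G ts i) (mu (ts ! i))))"
    by (rule sum.cong, auto simp: IH multiset.map_comp o_def algebra_simps)
  also have "\<dots> = image_mset (\<lambda>x. real n - a - x) (\<Sum>i<length ts. image_mset (\<lambda>x. x + Nbr G ts i) (mu (ts ! i)))"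
    by (simp add: image_mset_sum_fin)
  finally show ?case by (simp del: mu.simps add: mu_Node)
qed

lemma red_PM:
  fixes L :: "'a::linorder \<Rightarrow> 'a \<Rightarrow> real"
  assumes fin: "finite V" and c: "c \<in> V" and rs: "\<And>x. x \<in> V \<Longrightarrow> (\<Sum>y\<in>V. L x y) = 0"
    and cp: "cpS L V = PM (add_mset 0 \<mu>)"
  shows "cpS (\<lambda>x y. L x y - L c y) (V - {c}) = PM \<mu>"
proof -
  have "cpS L V = [:-0, 1:] * cpS (\<lambda>x y. L x y - L c y) (V - {c})"
    by (rule cpS_rowsum[OF fin c rs])
  then have "[:0, 1:] * cpS (\<lambda>x y. L x y - L c y) (V - {c}) = [:0, 1:] * PM \<mu>"
    using cp by simp
  then show ?thesis by (subst (asm) mult_cancel_left, simp)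
qed

theorem mainTheorem8:
  fixes T :: "'a::linorder stree"
  assumes "wf_ctree T"
    and "sorted_wrt (<) (leaves T)"
    and "length (leaves T) \<ge> 2"
  shows "mspec (laplacian_mat (leaves T) (compl_edges (leaves T) (comp_edges T)))
           = {#0#} + tree_part (length (leaves T)) 0 T"
proof -
  let ?vs = "leaves T"
  let ?V = "set ?vs"
  let ?E = "comp_edges T"
  let ?CE = "compl_edges ?vs ?E"
  let ?n = "length ?vs"
  let ?L = "Lap ?E ?V"
  let ?Lc = "Lap ?CE ?V"
  have wf: "wf_ctree T" by fact
  have d: "distinct ?vs" using assms(2) by (simp add: strict_sorted_iff)
  have cardV: "card ?V = ?n" using d by (simp add: distinct_card)
  define c where "c = hd ?vs"
  have c: "c \<in> ?V" using assms(3) by (cases ?vs, auto simp: c_def)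
  have irr: "(x,x) \<notin> ?E" for x by (rule edges_irrefl[OF wf d])
  have esub: "?E \<subseteq> ?V \<times> ?V" by (rule edges_sub)
  have Lc_eq: "?Lc x y = (if x = y then real ?n else 0) - 1 - ?L x y" if x: "x \<in> ?V" and y: "y \<in> ?V" for x y
  proof (cases "x = y")
    case True
    have "{z\<in>?V. (x,z) \<in> ?CE} = (?V - {x}) - {z\<in>?V. (x,z) \<in> ?E}"
      using x True by (auto simp: compl_edges_def)
    moreover have "{z\<in>?V. (x,z) \<in> ?E} \<subseteq> ?V - {x}" using irr by auto
    ultimately have "card {z\<in>?V. (x,z) \<in> ?CE} = card (?V - {x}) - card {z\<in>?V. (x,z) \<in> ?E}"
      by (simp add: card_Diff_subset)
    moreover have "card {z\<in>?V. (x,z) \<in> ?E} \<le> card (?V - {x})"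
      using \<open>{z\<in>?V. (x,z) \<in> ?E} \<subseteq> ?V - {x}\<close> by (intro card_mono) auto
    moreover have "card (?V - {x}) = ?n - 1" using x cardV by simp
    moreover have "?n \<ge> 1" using assms(3) by simp
    ultimately have "real (card {z\<in>?V. (x,z) \<in> ?CE}) = real ?n - 1 - real (card {z\<in>?V. (x,z) \<in> ?E})"
      by (simp add: of_nat_diff)
    then show ?thesis using True by (simp add: Lap_def)
  next
    case False
    then show ?thesis using x y by (auto simp: Lap_def compl_edges_def)
  qed
  have "char_poly (laplacian_mat ?vs ?CE) = cpS ?Lc ?V"
    unfolding laplacian_Lap[OF d] by (rule cpS_list[symmetric, OF d refl])
  also have "cpS ?Lc ?V = [:-0, 1:] * cpS (\<lambda>x y. ?Lc x y - ?Lc c y) (?V - {c})"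
  proof (rule cpS_rowsum[OF _ c])
    show "(\<Sum>y\<in>?V. ?Lc x y) = 0" if "x \<in> ?V" for x
      by (rule Lap_rowsum, insert that, auto simp: compl_edges_def)
  qed simp
  also have "cpS (\<lambda>x y. ?Lc x y - ?Lc c y) (?V - {c})
      = cpS (\<lambda>x y. (if x = y then real ?n else 0) - (?L x y - ?L c y)) (?V - {c})"
    by (rule cpS_cong, simp, auto simp: Lc_eq c)
  also have "\<dots> = (-1) ^ card (?V - {c}) * pcompose (cpS (\<lambda>x y. ?L x y - ?L c y) (?V - {c})) [:real ?n, -1:]"
    by (rule cpS_negshift, simp)
  also have "cpS (\<lambda>x y. ?L x y - ?L c y) (?V - {c}) = PM (mu T)"
    by (rule red_PM[OF _ c], simp, rule Lap_rowsum, simp, simp, rule irr, rule tree_lap[OF wf d])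
  also have "pcompose (PM (mu T)) [:real ?n, -1:] = (-1) ^ card (?V - {c}) * PM (image_mset (\<lambda>x. real ?n - x) (mu T))"
  proof -
    have "size (mu T) = card (?V - {c})"
      by (rule cpS_PM_size[of _ "\<lambda>x y. ?L x y - ?L c y"], simp,
          rule red_PM[OF _ c], simp, rule Lap_rowsum, simp, simp, rule irr, rule tree_lap[OF wf d])
    then show ?thesis by (simp add: PM_neg)
  qed
  also have "(-1) ^ card (?V - {c}) * ((-1) ^ card (?V - {c}) * PM (image_mset (\<lambda>x. real ?n - x) (mu T)))
      = PM (image_mset (\<lambda>x. real ?n - x) (mu T))"
    by (simp add: mult.assoc[symmetric] power_add[symmetric])
  finally have "char_poly (laplacian_mat ?vs ?CE) = PM (add_mset 0 (image_mset (\<lambda>x. real ?n - x) (mu T)))"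
    by simp
  then have "mspec (laplacian_mat ?vs ?CE) = add_mset 0 (image_mset (\<lambda>x. real ?n - x) (mu T))"
    by (rule mspec_eq)
  then show ?thesis by (simp add: tree_part_mu)
qed

end
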